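(* Let $\varepsilon>0$ and $\lambda<0$. Then the equilibrium point $$e_{2\lambda}=\Big(\frac{a}{\lambda-a_1},\frac{b}{\lambda-a_2},\frac{c}{\lambda-a_3}\Big)$$ of the $\varepsilon$-revised system $$\dot{\mathbf x}=\mathbf x\times\mathbf m(\mathbf x)+\varepsilon[(\mathbf x\times\mathbf m(\mathbf x))\times\mathbf m(\mathbf x)]$$ is Lyapunov stable.
   Context: Fix constants $0<a_1<a_2<a_3$ and $a,b,c\in\mathbb R$. Set $\mathbf m(\mathbf x)=(a_1x^1+a,\ a_2x^2+b,\ a_3x^3+c)$; $\times$ is the cross product in $\mathbb R^3$. *)

theory Defs
  imports "HOL-Analysis.Analysis" "HOL-Analysis.Cross3"
begin

definition mfield :: "real \<Rightarrow> real \<Rightarrow> real \<Rightarrow> real \<Rightarrow> real \<Rightarrow> real \<Rightarrow> real^3 \<Rightarrow> real^3" where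
  "mfield a1 a2 a3 a b c x = vector [a1 * x$1 + a, a2 * x$2 + b, a3 * x$3 + c]"

definition revised_field :: "real \<Rightarrow> real \<Rightarrow> real \<Rightarrow> real \<Rightarrow> real \<Rightarrow> real \<Rightarrow> real \<Rightarrow> real^3 \<Rightarrow> real^3" where
  "revised_field a1 a2 a3 a b c eps x =
     cross3 x (mfield a1 a2 a3 a b c x)
     + eps *\<^sub>R cross3 (cross3 x (mfield a1 a2 a3 a b c x)) (mfield a1 a2 a3 a b c x)"

definition is_solution_on :: "(real^3 \<Rightarrow> real^3) \<Rightarrow> (real \<Rightarrow> real^3) \<Rightarrow> real \<Rightarrow> bool" where
  "is_solution_on f x T \<longleftrightarrow>
     (\<forall>t\<in>{0..<T}. (x has_vector_derivative f (x t)) (at t within {0..<T}))"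

definition lyapunov_stable :: "(real^3 \<Rightarrow> real^3) \<Rightarrow> real^3 \<Rightarrow> bool" where
  "lyapunov_stable f e \<longleftrightarrow>
     f e = 0 \<and>
     (\<forall>r>0. \<exists>d>0. \<forall>x0. dist x0 e < d \<longrightarrow>
        (\<exists>x. x 0 = x0 \<and> (\<forall>T>0. is_solution_on f x T)) \<and>
        (\<forall>x T. T > 0 \<longrightarrow> x 0 = x0 \<longrightarrow> is_solution_on f x T \<longrightarrow>
             (\<forall>t\<in>{0..<T}. dist (x t) e < r)))"

end

theory Submission
  imports Defs "HOL-Analysis.Analysis"
begin

lemma poly_integral_bound:
  fixes M L t :: real and n :: nat
  assumes "0 \<le> t"
  shows "((\<lambda>s. L * (M * L^n * s^(Suc n) / fact (Suc n))) has_integral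
          (M * L^(Suc n) * t^(Suc (Suc n)) / fact (Suc (Suc n)))) {0..t}"
proof -
  have "((\<lambda>s. L * (M * L^n * s^(Suc n) / fact (Suc n))) has_integral
          (M * L^(Suc n) * t^(Suc (Suc n)) / fact (Suc (Suc n)) - M * L^(Suc n) * 0^(Suc (Suc n)) / fact (Suc (Suc n)))) {0..t}"
  proof (rule fundamental_theorem_of_calculus[OF assms])
    fix s :: real assume "s \<in> {0..t}"
    have "((\<lambda>s. M * L^(Suc n) * s^(Suc (Suc n)) / fact (Suc (Suc n))) has_real_derivative
           M * L^(Suc n) * (of_nat (Suc (Suc n)) * s^(Suc n)) / fact (Suc (Suc n))) (at s within {0..t})"
      by (intro derivative_eq_intros) auto
    moreover have "M * L^(Suc n) * (of_nat (Suc (Suc n)) * s^(Suc n)) / fact (Suc (Suc n)) = L * (M * L^n * s^(Suc n) / fact (Suc n))"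
      by (simp add: fact_Suc[of "Suc n"] field_simps del: of_nat_Suc fact_Suc)
    ultimately show "((\<lambda>s. M * L^(Suc n) * s^(Suc (Suc n)) / fact (Suc (Suc n))) has_vector_derivative
           L * (M * L^n * s^(Suc n) / fact (Suc n))) (at s within {0..t})"
      by (metis has_real_derivative_iff_has_vector_derivative)
  qed
  then show ?thesis by simp
qed

lemma picard_global:
  fixes F :: "'a::banach \<Rightarrow> 'a"
  assumes Lip: "\<And>x y. norm (F x - F y) \<le> L * norm (x - y)" and Lpos: "L > 0"
    and Mb: "\<And>x. norm (F x) \<le> M"
  shows "\<exists>x. x 0 = x0 \<and> (\<forall>T t. 0 \<le> t \<longrightarrow> t \<le> T \<longrightarrow>
           (x has_vector_derivative F (x t)) (at t within {0..T}))"
proof -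
  have "L-lipschitz_on UNIV F"
    using Lip Lpos by (intro lipschitz_onI) (auto simp: dist_norm)
  then have contF: "continuous_on UNIV F"
    by (rule lipschitz_on_continuous_on)
  have M0: "0 \<le> M" using Mb[of x0] norm_ge_zero[of "F x0"] by linarith
  define P where "P = rec_nat (\<lambda>t::real. x0) (\<lambda>n p t. x0 + integral {0..t} (\<lambda>s. F (p s)))"
  have P0: "P 0 = (\<lambda>t. x0)" and PS: "\<And>n. P (Suc n) = (\<lambda>t. x0 + integral {0..t} (\<lambda>s. F (P n s)))"
    by (simp_all add: P_def)
  have cont: "continuous_on {0..T} (P n)" for n T
  proof (induction n)
    case 0 show ?case by (simp add: P0)
  next
    case (Suc n)
    have "(\<lambda>s. F (P n s)) integrable_on {0..T}"
      by (rule integrable_continuous_real) (rule continuous_on_compose2[OF contF Suc.IH], auto)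
    then show ?case unfolding PS by (intro continuous_intros indefinite_integral_continuous_1)
  qed
  have intg: "(\<lambda>s. F (P n s)) integrable_on {0..T}" for n T
    by (rule integrable_continuous_real) (rule continuous_on_compose2[OF contF cont], auto)
  define d where "d n t = P (Suc n) t - P n t" for n t
  have bound: "norm (d n t) \<le> M * L^n * t^(Suc n) / fact (Suc n)" if "0 \<le> t" for n t
    using that
  proof (induction n arbitrary: t)
    case 0
    have "d 0 t = t *\<^sub>R F x0" using 0 by (simp add: d_def PS P0)
    then show ?case using 0 Mb[of x0] by (simp add: mult_left_mono mult.commute[of M])
  next
    case (Suc n)
    have "d (Suc n) t = integral {0..t} (\<lambda>s. F (P (Suc n) s) - F (P n s))"
      unfolding d_def
      using fun_cong[OF PS[of "Suc n"], of t] fun_cong[OF PS[of n], of t] integral_diff[OF intg[of "Suc n" t] intg[of n t]]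
      by simp
    also have "norm \<dots> \<le> integral {0..t} (\<lambda>s. L * (M * L^n * s^(Suc n) / fact (Suc n)))"
    proof (rule integral_norm_bound_integral)
      show "(\<lambda>s. F (P (Suc n) s) - F (P n s)) integrable_on {0..t}"
        by (intro integrable_diff intg)
      show "(\<lambda>s. L * (M * L^n * s^(Suc n) / fact (Suc n))) integrable_on {0..t}"
        using poly_integral_bound[OF Suc.prems] by blast
      fix s assume s: "s \<in> {0..t}"
      have "norm (F (P (Suc n) s) - F (P n s)) \<le> L * norm (d n s)"
        unfolding d_def by (rule Lip)
      also have "\<dots> \<le> L * (M * L^n * s^(Suc n) / fact (Suc n))"
        using Suc.IH[of s] s Lpos by (intro mult_left_mono) auto
      finally show "norm (F (P (Suc n) s) - F (P n s)) \<le> L * (M * L^n * s^(Suc n) / fact (Suc n))" .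
    qed
    also have "\<dots> = M * L^(Suc n) * t^(Suc (Suc n)) / fact (Suc (Suc n))"
      using poly_integral_bound[OF Suc.prems] by (rule integral_unique)
    finally show ?case .
  qed
  have Psum: "P n t = x0 + (\<Sum>i<n. d i t)" for n t
    by (induction n) (auto simp: P0 d_def)
  define x where "x t = x0 + (\<Sum>i. d i t)" for t
  have Pd0: "P n 0 = x0" for n
    by (cases n) (auto simp: P0 PS)
  have x0: "x 0 = x0" by (simp add: x_def d_def Pd0)
  have main: "(x has_vector_derivative F (x t)) (at t within {0..T})" if t: "0 \<le> t" "t \<le> T" for T t
  proof -
    define B where "B n = M * L^n * T^(Suc n) / fact (Suc n)" for n
    have "summable (\<lambda>n. (L*T)^(Suc n) / fact (Suc n))"
      using summable_exp[of "L*T"] summable_Suc_iff[where f="\<lambda>n. (L*T)^n / fact n"]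
      by (simp add: field_simps)
    then have "summable (\<lambda>n. (M / L) * ((L*T)^(Suc n) / fact (Suc n)))"
      by (rule summable_mult)
    moreover have "(M / L) * ((L*T)^(Suc n) / fact (Suc n)) = B n" for n
      using Lpos by (simp add: B_def power_mult_distrib field_simps)
    ultimately have sB: "summable B" by simp
    have dB: "norm (d n s) \<le> B n" if "s \<in> {0..T}" for n s
    proof -
      have "norm (d n s) \<le> M * L^n * s^(Suc n) / fact (Suc n)" using that bound by auto
      also have "\<dots> \<le> B n" unfolding B_def using that M0 Lpos
        by (intro divide_right_mono mult_left_mono power_mono) auto
      finally show ?thesis .
    qed
    have ul0: "uniform_limit {0..T} (\<lambda>n s. \<Sum>i<n. d i s) (\<lambda>s. \<Sum>i. d i s) sequentially"
      by (rule Weierstrass_m_test[OF dB sB])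
    have ul: "uniform_limit {0..T} P x sequentially"
      using ul0 unfolding uniform_limit_iff by (simp add: x_def Psum dist_add_cancel)
    have contx: "continuous_on {0..T} x"
      by (rule uniform_limit_theorem[OF _ ul]) (auto intro: cont always_eventually)
    have eq: "x s = x0 + integral {0..s} (\<lambda>u. F (x u))" if s: "0 \<le> s" "s \<le> T" for s
    proof -
      have ulF: "uniform_limit {0..s} (\<lambda>n u. F (P n u)) (\<lambda>u. F (x u)) sequentially"
        unfolding uniform_limit_iff
      proof (intro allI impI)
        fix e :: real assume e: "e > 0"
        have "\<forall>\<^sub>F n in sequentially. \<forall>u\<in>{0..T}. dist (P n u) (x u) < e / L"
          using ul e Lpos unfolding uniform_limit_iff by auto
        then show "\<forall>\<^sub>F n in sequentially. \<forall>u\<in>{0..s}. dist (F (P n u)) (F (x u)) < e"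
        proof eventually_elim
          case (elim n)
          show ?case
          proof
            fix u assume u: "u \<in> {0..s}"
            have "dist (F (P n u)) (F (x u)) \<le> L * dist (P n u) (x u)"
              using Lip by (simp add: dist_norm)
            also have "\<dots> < L * (e / L)"
              using elim u s Lpos by (intro mult_strict_left_mono) auto
            finally show "dist (F (P n u)) (F (x u)) < e" using Lpos by simp
          qed
        qed
      qed
      have cF: "continuous_on (cbox 0 s) (\<lambda>u. F (P n u))" for n
        unfolding cbox_interval by (rule continuous_on_compose2[OF contF cont]) auto
      obtain I J where I: "\<And>n. ((\<lambda>u. F (P n u)) has_integral I n) (cbox 0 s)"
        and J: "((\<lambda>u. F (x u)) has_integral J) (cbox 0 s)" and IJ: "I \<longlonglongrightarrow> J"
        by (rule uniform_limit_integral_cbox[where a=0 and b=s and f="\<lambda>n u. F (P n u)" and g="\<lambda>u. F (x u)" and F=sequentially])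
           (use ulF cF in auto)
      have "(\<lambda>n. integral {0..s} (\<lambda>u. F (P n u))) = I"
        using I by (auto simp: integral_unique)
      then have "(\<lambda>n. P (Suc n) s) \<longlonglongrightarrow> x0 + J"
        unfolding PS using IJ by (auto intro!: tendsto_add)
      moreover have "(\<lambda>n. P (Suc n) s) \<longlonglongrightarrow> x s"
        using LIMSEQ_Suc[OF tendsto_uniform_limitI[OF ul, of s]] s by auto
      ultimately have "x s = x0 + J" by (rule LIMSEQ_unique[rotated])
      then show ?thesis using J by (simp add: integral_unique)
    qed
    have cFx: "continuous_on {0..T} (\<lambda>u. F (x u))"
      by (rule continuous_on_compose2[OF contF contx]) auto
    have "((\<lambda>u. integral {0..u} (\<lambda>u. F (x u))) has_vector_derivative F (x t)) (at t within {0..T})"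
      by (rule integral_has_vector_derivative[OF cFx]) (use t in auto)
    from has_vector_derivative_add[OF has_vector_derivative_const this]
    have "((\<lambda>u. x0 + integral {0..u} (\<lambda>u. F (x u))) has_vector_derivative F (x t)) (at t within {0..T})"
      by simp
    then show ?thesis
      by (rule has_vector_derivative_transform[rotated 2]) (use t eq in auto)
  qed
  show ?thesis using x0 main by blast
qed

lemma cross_identity:
  fixes x m :: "real^3" and l e :: real
  shows "(m$1 - l*x$1) * (cross3 x m + e *\<^sub>R cross3 (cross3 x m) m)$1
       + (m$2 - l*x$2) * (cross3 x m + e *\<^sub>R cross3 (cross3 x m) m)$2
       + (m$3 - l*x$3) * (cross3 x m + e *\<^sub>R cross3 (cross3 x m) m)$3
       = l * e * ((cross3 x m)$1^2 + (cross3 x m)$2^2 + (cross3 x m)$3^2)"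
  by (simp add: cross3_def power2_eq_square algebra_simps)

lemma norm_cross_le: "norm (cross3 p q) \<le> norm p * norm q"
proof -
  have "(norm (cross3 p q))^2 \<le> (norm p * norm q)^2"
    using norm_cross[of p q] by (simp add: power_mult_distrib)
  then show ?thesis by (rule power2_le_imp_le) simp
qed

lemma cross_diff_bound:
  "norm (cross3 p q - cross3 p' q') \<le> norm (p - p') * norm q + norm p' * norm (q - q')"
proof -
  have "cross3 p q - cross3 p' q' = cross3 (p - p') q + cross3 p' (q - q')"
    by (simp add: cross3_simps)
  then have "norm (cross3 p q - cross3 p' q') \<le> norm (cross3 (p - p') q) + norm (cross3 p' (q - q'))"
    by (metis norm_triangle_ineq)
  also have "\<dots> \<le> norm (p - p') * norm q + norm p' * norm (q - q')"
    by (intro add_mono norm_cross_le)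
  finally show ?thesis .
qed

lemma mfield_diff:
  assumes "0 \<le> a1" "0 \<le> a2" "0 \<le> a3"
  shows "norm (mfield a1 a2 a3 a b c y - mfield a1 a2 a3 a b c z) \<le> (a1 + a2 + a3) * norm (y - z)"
proof -
  have "norm (mfield a1 a2 a3 a b c y - mfield a1 a2 a3 a b c z)
     \<le> (\<Sum>i\<in>UNIV. \<bar>(mfield a1 a2 a3 a b c y - mfield a1 a2 a3 a b c z) $ i\<bar>)"
    by (rule norm_le_l1_cart)
  also have "\<dots> = \<bar>a1 * (y - z)$1\<bar> + \<bar>a2 * (y - z)$2\<bar> + \<bar>a3 * (y - z)$3\<bar>"
    by (simp add: sum_3 mfield_def algebra_simps)
  also have "\<dots> \<le> a1 * norm (y - z) + a2 * norm (y - z) + a3 * norm (y - z)"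
    using assms component_le_norm_cart[of "y - z"] by (intro add_mono) (auto simp: abs_mult intro!: mult_left_mono)
  finally show ?thesis by (simp add: algebra_simps)
qed

lemma field_lipschitz_bounded:
  assumes "0 \<le> a1" "0 \<le> a2" "0 \<le> a3" "0 \<le> eps" "0 \<le> B"
  shows "\<exists>L>0. \<forall>y z. norm y \<le> B \<longrightarrow> norm z \<le> B \<longrightarrow>
     norm (revised_field a1 a2 a3 a b c eps y - revised_field a1 a2 a3 a b c eps z) \<le> L * norm (y - z)"
proof -
  define m where "m = mfield a1 a2 a3 a b c"
  define A where "A = a1 + a2 + a3"
  have A0: "0 \<le> A" using assms by (simp add: A_def)
  have md: "norm (m y - m z) \<le> A * norm (y - z)" for y z
    unfolding m_def A_def using mfield_diff[OF assms(1-3)] by blast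
  define Bm where "Bm = norm (m 0) + A * B"
  have Bm0: "0 \<le> Bm" using A0 assms by (simp add: Bm_def)
  have mb: "norm (m y) \<le> Bm" if "norm y \<le> B" for y
  proof -
    have "norm (m y) \<le> norm (m 0) + norm (m y - m 0)"
      by (rule norm_triangle_sub)
    also have "\<dots> \<le> norm (m 0) + A * B"
      using md[of y 0] that A0 mult_left_mono[OF that A0] by simp
    finally show ?thesis by (simp add: Bm_def)
  qed
  define K1 where "K1 = Bm + B * A"
  define K2 where "K2 = K1 * Bm + B * Bm * A"
  have K10: "0 \<le> K1" and K20: "0 \<le> K2" using Bm0 A0 assms by (simp_all add: K1_def K2_def)
  show ?thesis
  proof (intro exI[of _ "K1 + eps * K2 + 1"] conjI allI impI)
    show "0 < K1 + eps * K2 + 1" using K10 K20 assms by (simp add: add_nonneg_pos)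
    fix y z :: "real^3" assume y: "norm y \<le> B" and z: "norm z \<le> B"
    define u where "u = cross3 y (m y)"
    define v where "v = cross3 z (m z)"
    have uv: "norm (u - v) \<le> K1 * norm (y - z)"
    proof -
      have "norm (u - v) \<le> norm (y - z) * norm (m y) + norm z * norm (m y - m z)"
        unfolding u_def v_def by (rule cross_diff_bound)
      also have "\<dots> \<le> norm (y - z) * Bm + B * (A * norm (y - z))"
        using mb[OF y] z md[of y z] A0 assms
        by (intro add_mono mult_left_mono mult_mono) auto
      finally show ?thesis by (simp add: K1_def algebra_simps)
    qed
    have vb: "norm v \<le> B * Bm"
      unfolding v_def using norm_cross_le[of z "m z"] mult_mono[OF z mb[OF z]] assms by simp
    have uv2: "norm (cross3 u (m y) - cross3 v (m z)) \<le> K2 * norm (y - z)"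
    proof -
      have "norm (cross3 u (m y) - cross3 v (m z)) \<le> norm (u - v) * norm (m y) + norm v * norm (m y - m z)"
        by (rule cross_diff_bound)
      also have "\<dots> \<le> (K1 * norm (y - z)) * Bm + (B * Bm) * (A * norm (y - z))"
        using mb[OF y] md[of y z] uv vb A0 K10 Bm0 assms
        by (intro add_mono mult_mono) auto
      finally show ?thesis by (simp add: K2_def algebra_simps)
    qed
    have "revised_field a1 a2 a3 a b c eps y - revised_field a1 a2 a3 a b c eps z
        = (u - v) + eps *\<^sub>R (cross3 u (m y) - cross3 v (m z))"
      by (simp add: revised_field_def u_def v_def m_def algebra_simps)
    then have "norm (revised_field a1 a2 a3 a b c eps y - revised_field a1 a2 a3 a b c eps z)
        \<le> norm (u - v) + eps * norm (cross3 u (m y) - cross3 v (m z))"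
      using norm_triangle_ineq[of "u - v" "eps *\<^sub>R (cross3 u (m y) - cross3 v (m z))"] assms by simp
    also have "\<dots> \<le> K1 * norm (y - z) + eps * (K2 * norm (y - z))"
      using uv uv2 assms by (intro add_mono mult_left_mono) auto
    also have "\<dots> \<le> (K1 + eps * K2 + 1) * norm (y - z)"
      by (simp add: algebra_simps)
    finally show "norm (revised_field a1 a2 a3 a b c eps y - revised_field a1 a2 a3 a b c eps z)
        \<le> (K1 + eps * K2 + 1) * norm (y - z)" .
  qed
qed

definition Wf :: "real \<Rightarrow> real \<Rightarrow> real \<Rightarrow> real^3 \<Rightarrow> real^3 \<Rightarrow> real" where
  "Wf c1 c2 c3 E y = c1*(y$1-E$1)^2 + c2*(y$2-E$2)^2 + c3*(y$3-E$3)^2"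
definition Qf :: "real \<Rightarrow> real \<Rightarrow> real \<Rightarrow> real^3 \<Rightarrow> real^3 \<Rightarrow> real^3 \<Rightarrow> real" where
  "Qf c1 c2 c3 E y v = c1*(y$1-E$1) * v$1 + c2*(y$2-E$2) * v$2 + c3*(y$3-E$3) * v$3"

lemma W_decr:
  assumes der: "\<And>t. t \<in> {0..<T} \<Longrightarrow> (x has_vector_derivative G (x t)) (at t within {0..<T})"
    and Q: "\<And>y. Qf c1 c2 c3 E y (G y) \<le> 0" and t: "0 \<le> t" "t < T"
  shows "Wf c1 c2 c3 E (x t) \<le> Wf c1 c2 c3 E (x 0)"
proof -
  have d: "((\<lambda>s. Wf c1 c2 c3 E (x s)) has_vector_derivative 2 * Qf c1 c2 c3 E (x s) (G (x s))) (at s within {0..t})"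
    if s: "s \<in> {0..t}" for s
  proof -
    have xd: "(x has_vector_derivative G (x s)) (at s within {0..t})"
      using der[of s] s t by (auto intro: has_vector_derivative_within_subset)
    have c: "((\<lambda>s. x s $ i) has_real_derivative G (x s) $ i) (at s within {0..t})" for i
      using bounded_linear.has_vector_derivative[OF bounded_linear_vec_nth xd]
      by (simp add: has_real_derivative_iff_has_vector_derivative)
    have "((\<lambda>s. Wf c1 c2 c3 E (x s)) has_real_derivative 2 * Qf c1 c2 c3 E (x s) (G (x s))) (at s within {0..t})"
      unfolding Wf_def Qf_def
      by (rule derivative_eq_intros c refl)+ (simp add: algebra_simps)
    then show ?thesis by (simp add: has_real_derivative_iff_has_vector_derivative)
  qed
  have I: "((\<lambda>s. 2 * Qf c1 c2 c3 E (x s) (G (x s))) has_integral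
       (Wf c1 c2 c3 E (x t) - Wf c1 c2 c3 E (x 0))) {0..t}"
    by (rule fundamental_theorem_of_calculus[OF t(1) d])
  have "Wf c1 c2 c3 E (x t) - Wf c1 c2 c3 E (x 0) \<le> 0"
    by (rule has_integral_le[OF I has_integral_0]) (use Q in auto)
  then show ?thesis by simp
qed

lemma Q_scale:
  assumes "y' - E = s *\<^sub>R (y - E)"
  shows "Qf c1 c2 c3 E y' v = s * Qf c1 c2 c3 E y v"
proof -
  have h: "y'$i = E$i + s * (y$i - E$i)" for i
    using arg_cong[OF assms, of "\<lambda>w. w $ i"] by (simp add: algebra_simps)
  show ?thesis by (simp add: Qf_def h algebra_simps)
qed

lemma closest_radial:
  fixes E y :: "real^3"
  assumes "R > 0"
  shows "\<exists>s>0. closest_point (cball E R) y - E = s *\<^sub>R (y - E)"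
proof (cases "y \<in> cball E R")
  case True
  then have "closest_point (cball E R) y = y" by (simp add: closest_point_self)
  then show ?thesis by (intro exI[of _ 1]) auto
next
  case False
  define n where "n = norm (y - E)"
  have n: "n > R" using False by (simp add: n_def dist_norm norm_minus_commute)
  define z where "z = E + (R / n) *\<^sub>R (y - E)"
  have zc: "z \<in> cball E R" using n assms
    by (simp add: z_def dist_norm n_def)
  have yz: "dist y z = n - R"
  proof -
    have "y - z = (1 - R / n) *\<^sub>R (y - E)" by (simp add: z_def algebra_simps)
    moreover have "R / n \<le> 1" using n assms by simp
    ultimately have "norm (y - z) = (1 - R / n) * n"
      using n assms by (simp add: n_def)
    moreover have "(1 - R / n) * n = n - R" using n assms by (simp add: field_simps)
    ultimately show ?thesis by (simp add: dist_norm)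
  qed
  have "z = closest_point (cball E R) y"
  proof (rule closest_point_unique)
    show "\<forall>w\<in>cball E R. dist y z \<le> dist y w"
    proof
      fix w assume "w \<in> cball E R"
      then have "dist E w \<le> R" by simp
      moreover have "n \<le> dist y w + dist w E" unfolding n_def
        by (metis dist_norm dist_triangle)
      ultimately show "dist y z \<le> dist y w" using yz by (simp add: dist_commute)
    qed
  qed (use zc in auto)
  then have "closest_point (cball E R) y - E = (R / n) *\<^sub>R (y - E)"
    unfolding z_def by (metis add_diff_cancel_left')
  then show ?thesis using n assms by (intro exI[of _ "R / n"]) auto
qed

lemma norm3_sq: "(norm (v::real^3))^2 = (v$1)^2 + (v$2)^2 + (v$3)^2"
  unfolding power2_norm_eq_inner by (simp add: inner_vec_def sum_3 power2_eq_square)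

theorem theorem6p5:
  fixes a1 a2 a3 a b c eps lam :: real
  assumes "0 < a1" and "a1 < a2" and "a2 < a3"
    and "eps > 0" and "lam < 0"
  shows "lyapunov_stable (revised_field a1 a2 a3 a b c eps)
           (vector [a / (lam - a1), b / (lam - a2), c / (lam - a3)])"
proof -
  define E :: "real^3" where "E = vector [a / (lam - a1), b / (lam - a2), c / (lam - a3)]"
  define f where "f = revised_field a1 a2 a3 a b c eps"
  define c1 where "c1 = a1 - lam"
  define c2 where "c2 = a2 - lam"
  define c3 where "c3 = a3 - lam"
  have ne1: "lam - a1 \<noteq> 0" and ne2: "lam - a2 \<noteq> 0" and ne3: "lam - a3 \<noteq> 0"
    using assms by auto
  have c1p: "0 < c1" and c12: "c1 \<le> c2" and c23: "c2 \<le> c3"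
    using assms by (auto simp: c1_def c2_def c3_def)
  have mE: "mfield a1 a2 a3 a b c E = lam *\<^sub>R E"
    using ne1 ne2 ne3 by (simp add: vec_eq_iff forall_3 mfield_def E_def field_simps)
  have fE: "f E = 0"
    by (simp add: f_def revised_field_def mE cross_mult_right)
  have Qf_f: "Qf c1 c2 c3 E y (f y) \<le> 0" for y
  proof -
    define m where "m = mfield a1 a2 a3 a b c y"
    have h1: "c1 * (y$1 - E$1) = m$1 - lam * y$1"
      using ne1 by (simp add: c1_def E_def m_def mfield_def field_simps)
    have h2: "c2 * (y$2 - E$2) = m$2 - lam * y$2"
      using ne2 by (simp add: c2_def E_def m_def mfield_def field_simps)
    have h3: "c3 * (y$3 - E$3) = m$3 - lam * y$3"
      using ne3 by (simp add: c3_def E_def m_def mfield_def field_simps)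
    have "Qf c1 c2 c3 E y (f y) = lam * eps * ((cross3 y m)$1^2 + (cross3 y m)$2^2 + (cross3 y m)$3^2)"
      unfolding Qf_def h1 h2 h3 f_def revised_field_def m_def[symmetric]
      by (rule cross_identity)
    also have "\<dots> \<le> 0"
      using assms by (intro mult_nonpos_nonneg) (auto intro: mult_nonpos_nonneg)
    finally show ?thesis .
  qed
  have Wlow: "c1 * (norm (y - E))^2 \<le> Wf c1 c2 c3 E y" for y
    unfolding norm3_sq Wf_def using c12 c23
    by (simp add: algebra_simps add_mono mult_right_mono)
  have Whigh: "Wf c1 c2 c3 E y \<le> c3 * (norm (y - E))^2" for y
    unfolding norm3_sq Wf_def using c12 c23
    by (simp add: algebra_simps add_mono mult_right_mono)
  show ?thesis
    unfolding lyapunov_stable_def E_def[symmetric] f_def[symmetric]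
  proof (intro conjI allI impI fE)
    fix r :: real assume r: "r > 0"
    define d where "d = r * c1 / c3"
    have dpos: "d > 0" using r c1p c12 c23 by (simp add: d_def)
    have close: "norm (z - E) < r" if Wz: "Wf c1 c2 c3 E z \<le> Wf c1 c2 c3 E x0" and x0: "dist x0 E < d" for z x0
    proof -
      have "c1 * (norm (z - E))^2 \<le> c3 * (norm (x0 - E))^2"
        using Wlow[of z] Wz Whigh[of x0] by linarith
      also have "\<dots> < c3 * d^2"
        using x0 c1p c12 c23 by (intro mult_strict_left_mono power_strict_mono) (auto simp: dist_norm)
      also have "\<dots> = c1 * (r^2 * (c1 / c3))"
        using c1p c12 c23 by (simp add: d_def power2_eq_square field_simps)
      also have "\<dots> \<le> c1 * r^2"
      proof -
        have "c1 / c3 \<le> 1" using c1p c12 c23 by simp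
        then have "r^2 * (c1 / c3) \<le> r^2" by (intro mult_left_le) auto
        then show ?thesis using c1p by (intro mult_left_mono) auto
      qed
      finally have "(norm (z - E))^2 < r^2" using c1p by simp
      then show ?thesis using r by (simp add: power_less_imp_less_base)
    qed
    show "\<exists>d>0. \<forall>x0. dist x0 E < d \<longrightarrow>
              (\<exists>x. x 0 = x0 \<and> (\<forall>T>0. is_solution_on f x T)) \<and>
              (\<forall>x T. 0 < T \<longrightarrow> x 0 = x0 \<longrightarrow> is_solution_on f x T \<longrightarrow> (\<forall>t\<in>{0..<T}. dist (x t) E < r))"
    proof (intro exI[of _ d] conjI dpos allI impI ballI)
      fix x0 assume x0: "dist x0 E < d"
      {
        fix x T t assume "0 < T" "x 0 = x0" and sol: "is_solution_on f x T" and t: "t \<in> {0..<T}"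
        have "Wf c1 c2 c3 E (x t) \<le> Wf c1 c2 c3 E (x 0)"
          by (rule W_decr[of T x f, OF _ Qf_f]) (use sol t in \<open>auto simp: is_solution_on_def\<close>)
        then show "dist (x t) E < r"
          using close[OF _ x0] \<open>x 0 = x0\<close> by (simp add: dist_norm)
      }
      define B where "B = norm E + r"
      obtain L where L0: "L > 0" and Lf: "\<And>y z. norm y \<le> B \<Longrightarrow> norm z \<le> B \<Longrightarrow> norm (f y - f z) \<le> L * norm (y - z)"
        using field_lipschitz_bounded[of a1 a2 a3 eps B a b c] assms r unfolding f_def B_def by auto
      define cp where "cp = closest_point (cball E r)"
      have cpin: "cp y \<in> cball E r" for y
        unfolding cp_def using r by (intro closest_point_in_set) auto
      have cpB: "norm (cp y) \<le> B" for y
      proof -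
        have "norm (cp y) \<le> norm E + norm (cp y - E)" by (rule norm_triangle_sub)
        also have "norm (cp y - E) \<le> r" using cpin[of y] by (simp add: dist_norm norm_minus_commute)
        finally show ?thesis by (simp add: B_def)
      qed
      have EB: "norm E \<le> B" using r by (simp add: B_def)
      define F where "F y = f (cp y)" for y
      have FL: "norm (F y - F z) \<le> L * norm (y - z)" for y z
      proof -
        have "norm (F y - F z) \<le> L * norm (cp y - cp z)" unfolding F_def by (rule Lf[OF cpB cpB])
        also have "\<dots> \<le> L * norm (y - z)"
          using closest_point_lipschitz[of "cball E r" y z] r L0 unfolding cp_def
          by (intro mult_left_mono) (auto simp: dist_norm)
        finally show ?thesis .
      qed
      have FM: "norm (F y) \<le> L * r" for y
      proof -
        have "norm (F y) = norm (f (cp y) - f E)" by (simp add: F_def fE)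
        also have "\<dots> \<le> L * norm (cp y - E)" by (rule Lf[OF cpB EB])
        also have "\<dots> \<le> L * r" using cpin[of y] L0
          by (intro mult_left_mono) (auto simp: dist_norm norm_minus_commute)
        finally show ?thesis .
      qed
      have QF: "Qf c1 c2 c3 E y (F y) \<le> 0" for y
      proof -
        obtain s where s: "s > 0" "cp y - E = s *\<^sub>R (y - E)"
          using closest_radial[OF r, of E y] unfolding cp_def by blast
        have "s * Qf c1 c2 c3 E y (F y) = Qf c1 c2 c3 E (cp y) (f (cp y))"
          using Q_scale[OF s(2)] by (simp add: F_def)
        also have "\<dots> \<le> 0" by (rule Qf_f)
        finally show ?thesis using s(1) by (simp add: mult_le_0_iff)
      qed
      obtain x where x0e: "x 0 = x0" and xd: "\<And>T t. 0 \<le> t \<Longrightarrow> t \<le> T \<Longrightarrow> (x has_vector_derivative F (x t)) (at t within {0..T})"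
        using picard_global[OF FL L0 FM, of x0] by blast
      show "\<exists>x. x 0 = x0 \<and> (\<forall>T>0. is_solution_on f x T)"
      proof (intro exI[of _ x] conjI x0e allI impI)
        fix T :: real assume T: "T > 0"
        have xdT: "(x has_vector_derivative F (x t)) (at t within {0..<T})" if t: "t \<in> {0..<T}" for t
          using xd[of t T] t by (auto intro: has_vector_derivative_within_subset)
        have "F (x t) = f (x t)" if t: "t \<in> {0..<T}" for t
        proof -
          have "Wf c1 c2 c3 E (x t) \<le> Wf c1 c2 c3 E (x 0)"
            by (rule W_decr[of T x F, OF xdT QF]) (use t in auto)
          then have "norm (x t - E) < r" using close[OF _ x0] x0e by simp
          then have "x t \<in> cball E r" by (simp add: dist_norm norm_minus_commute)
          then show ?thesis by (simp add: F_def cp_def closest_point_self)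
        qed
        then show "is_solution_on f x T"
          unfolding is_solution_on_def using xdT by auto
      qed
    qed
  qed
qed

end
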